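(* Let $|p|<1$, $|P|<1$, let $n\ge0$ be an integer, and let $a,b,c,q,r$ and $A,B,C,Q,R$ be nonzero complex numbers such that all expressions below are well defined. Then \begin{align*} &\sum_{k=0}^n\frac{\theta(ar^kq^k,\,br^kq^{-k};p)}{\theta(a,b;p)}\,\frac{(a,b;r,p)_k\,(c,a/(bc);q,p)_k}{(q,aq/b;q,p)_k\,(ar/c,bcr;r,p)_k}\\ &\qquad\times\frac{(CR^{-n}/A,\,R^{-n}/(BC);R,P)_k\,(Q^{-n},\,BQ^{-n}/A;Q,P)_k}{(Q^{-n}/C,\,BCQ^{-n}/A;Q,P)_k\,(R^{-n}/A,\,R^{-n}/B;R,P)_k}\,q^k\\ &=\frac{(ar,br;r,p)_n\,(cq,aq/(bc);q,p)_n\,(Q,AQ/B;Q,P)_n\,(AR/C,BCR;R,P)_n}{(q,aq/b;q,p)_n\,(ar/c,bcr;r,p)_n\,(AR,BR;R,P)_n\,(CQ,AQ/(BC);Q,P)_n}\\ &\quad\times\sum_{k=0}^n\frac{\theta(AR^kQ^k,\,BR^kQ^{-k};P)}{\theta(A,B;P)}\,\frac{(A,B;R,P)_k\,(C,A/(BC);Q,P)_k}{(Q,AQ/B;Q,P)_k\,(AR/C,BCR;R,P)_k}\\ &\qquad\times\frac{(cr^{-n}/a,\,r^{-n}/(bc);r,p)_k\,(q^{-n},\,bq^{-n}/a;q,p)_k}{(q^{-n}/c,\,bcq^{-n}/a;q,p)_k\,(r^{-n}/a,\,r^{-n}/b;r,p)_k}\,Q^k. \end{align*}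
   Context: For $|p|<1$ and $x\neq 0$, $\theta(x;p)=(x;p)_\infty(p/x;p)_\infty$ where $(x;p)_\infty=\prod_{k\ge 0}(1-xp^k)$, and $\theta(x_1,\dots,x_m;p)=\prod_{i=1}^m\theta(x_i;p)$. For $a\ne0$ and integer $k\ge0$, $(a;q,p)_k=\prod_{j=0}^{k-1}\theta(aq^j;p)$ (empty product $=1$), and $(a_1,\dots,a_m;q,p)_k=\prod_i(a_i;q,p)_k$. *)

theory Defs
  imports "HOL-Analysis.Analysis"
begin

definition qpinf :: "complex \<Rightarrow> complex \<Rightarrow> complex" where
  "qpinf x p = (\<Prod>k. (1 - x * p ^ k))"

definition theta :: "complex \<Rightarrow> complex \<Rightarrow> complex" where
  "theta x p = qpinf x p * qpinf (p / x) p"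

text \<open>Theta shifted factorial (a;q,p)_k.\<close>
definition epoch :: "complex \<Rightarrow> complex \<Rightarrow> complex \<Rightarrow> nat \<Rightarrow> complex" where
  "epoch a q p k = (\<Prod>j<k. theta (a * q ^ j) p)"

definition sum_num ::
  "complex \<Rightarrow> complex \<Rightarrow> complex \<Rightarrow> complex \<Rightarrow> complex \<Rightarrow> complex \<Rightarrow>
   complex \<Rightarrow> complex \<Rightarrow> complex \<Rightarrow> complex \<Rightarrow> complex \<Rightarrow> complex \<Rightarrow> nat \<Rightarrow> nat \<Rightarrow> complex" where
  "sum_num a b c q r p A B C Q R P n k =
     theta (a * r ^ k * q ^ k) p * theta (b * r ^ k * inverse q ^ k) p
     * epoch a r p k * epoch b r p k * epoch c q p k * epoch (a / (b * c)) q p k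
     * epoch (C * inverse R ^ n / A) R P k * epoch (inverse R ^ n / (B * C)) R P k
     * epoch (inverse Q ^ n) Q P k * epoch (B * inverse Q ^ n / A) Q P k"

definition sum_den ::
  "complex \<Rightarrow> complex \<Rightarrow> complex \<Rightarrow> complex \<Rightarrow> complex \<Rightarrow> complex \<Rightarrow>
   complex \<Rightarrow> complex \<Rightarrow> complex \<Rightarrow> complex \<Rightarrow> complex \<Rightarrow> complex \<Rightarrow> nat \<Rightarrow> nat \<Rightarrow> complex" where
  "sum_den a b c q r p A B C Q R P n k =
     theta a p * theta b p
     * epoch q q p k * epoch (a * q / b) q p k * epoch (a * r / c) r p k * epoch (b * c * r) r p k
     * epoch (inverse Q ^ n / C) Q P k * epoch (B * C * inverse Q ^ n / A) Q P k
     * epoch (inverse R ^ n / A) R P k * epoch (inverse R ^ n / B) R P k"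

definition summand ::
  "complex \<Rightarrow> complex \<Rightarrow> complex \<Rightarrow> complex \<Rightarrow> complex \<Rightarrow> complex \<Rightarrow>
   complex \<Rightarrow> complex \<Rightarrow> complex \<Rightarrow> complex \<Rightarrow> complex \<Rightarrow> complex \<Rightarrow> nat \<Rightarrow> nat \<Rightarrow> complex" where
  "summand a b c q r p A B C Q R P n k =
     sum_num a b c q r p A B C Q R P n k / sum_den a b c q r p A B C Q R P n k * q ^ k"

definition pre_num ::
  "complex \<Rightarrow> complex \<Rightarrow> complex \<Rightarrow> complex \<Rightarrow> complex \<Rightarrow> complex \<Rightarrow>
   complex \<Rightarrow> complex \<Rightarrow> complex \<Rightarrow> complex \<Rightarrow> complex \<Rightarrow> complex \<Rightarrow> nat \<Rightarrow> complex" where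
  "pre_num a b c q r p A B C Q R P n =
     epoch (a * r) r p n * epoch (b * r) r p n * epoch (c * q) q p n * epoch (a * q / (b * c)) q p n
     * epoch Q Q P n * epoch (A * Q / B) Q P n * epoch (A * R / C) R P n * epoch (B * C * R) R P n"

definition pre_den ::
  "complex \<Rightarrow> complex \<Rightarrow> complex \<Rightarrow> complex \<Rightarrow> complex \<Rightarrow> complex \<Rightarrow>
   complex \<Rightarrow> complex \<Rightarrow> complex \<Rightarrow> complex \<Rightarrow> complex \<Rightarrow> complex \<Rightarrow> nat \<Rightarrow> complex" where
  "pre_den a b c q r p A B C Q R P n =
     epoch q q p n * epoch (a * q / b) q p n * epoch (a * r / c) r p n * epoch (b * c * r) r p n
     * epoch (A * R) R P n * epoch (B * R) R P n * epoch (C * Q) Q P n * epoch (A * Q / (B * C)) Q P n"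

end

theory Submission
  imports Defs "HOL-Complex_Analysis.Complex_Analysis"
begin


lemma qp_abs_conv:
  fixes x p :: complex assumes "norm p < 1"
  shows "abs_convergent_prod (\<lambda>k. 1 - x * p ^ k)"
proof (rule summable_imp_abs_convergent_prod)
  have "summable (\<lambda>k. norm x * norm p ^ k)"
    using assms by (intro summable_mult summable_geometric) auto
  thus "summable (\<lambda>k. norm (1 - x * p ^ k - 1))"
    by (simp add: norm_mult norm_power)
qed

lemma qp_conv:
  fixes x p :: complex assumes "norm p < 1"
  shows "convergent_prod (\<lambda>k. 1 - x * p ^ k)"
  by (rule abs_convergent_prod_imp_convergent_prod[OF qp_abs_conv[OF assms]])

lemma qpinf_shift:
  fixes x p :: complex assumes "norm p < 1"
  shows "qpinf x p = (1 - x) * qpinf (x * p) p"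
proof (cases "x = 1")
  case True
  have "(\<lambda>k. 1 - x * p ^ k) has_prod qpinf x p"
    unfolding qpinf_def using qp_conv[OF assms] by (rule convergent_prod_has_prod)
  moreover have "0 \<in> range (\<lambda>k. 1 - x * p ^ k)" using True
    by (auto simp: image_iff intro!: exI[of _ 0])
  ultimately have "qpinf x p = 0" using has_prod_eq_0_iff by blast
  thus ?thesis using True by simp
next
  case False
  have "(\<Prod>n. (\<lambda>k. 1 - x * p ^ k) (Suc n)) = qpinf x p / (1 - x)"
    unfolding qpinf_def using False
    by (subst prodinf_split_head[OF qp_conv[OF assms]]) auto
  moreover have "(\<Prod>n. (\<lambda>k. 1 - x * p ^ k) (Suc n)) = qpinf (x * p) p"
    unfolding qpinf_def by (simp add: mult.assoc)
  ultimately have "qpinf (x * p) p = qpinf x p / (1 - x)" by simp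
  thus ?thesis using False by (simp add: nonzero_eq_divide_eq mult.commute)
qed

lemma qpinf_zero_iff:
  fixes x p :: complex assumes "norm p < 1"
  shows "qpinf x p = 0 \<longleftrightarrow> (\<exists>k. x * p ^ k = 1)"
proof -
  have "(\<lambda>k. 1 - x * p ^ k) has_prod qpinf x p"
    unfolding qpinf_def using qp_conv[OF assms] by (rule convergent_prod_has_prod)
  hence "qpinf x p = 0 \<longleftrightarrow> 0 \<in> range (\<lambda>k. 1 - x * p ^ k)"
    by (rule has_prod_eq_0_iff)
  also have "\<dots> \<longleftrightarrow> (\<exists>k. 0 = 1 - x * p ^ k)" by blast
  also have "\<dots> \<longleftrightarrow> (\<exists>k. x * p ^ k = 1)" by (intro ex_cong1) auto
  finally show ?thesis .
qed

lemma aux_shift: "(x::complex) \<noteq> 0 \<Longrightarrow> T1 = (1 - x) * A * B \<Longrightarrow> T2 = A * ((1 - 1 / x) * B) \<Longrightarrow> T2 = - T1 / x"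
  by (simp add: field_simps) algebra

lemma theta_shift:
  fixes x p :: complex assumes "norm p < 1" "p \<noteq> 0" "x \<noteq> 0"
  shows "theta (p * x) p = - theta x p / x"
proof (rule aux_shift[OF assms(3)])
  show "theta x p = (1 - x) * qpinf (p * x) p * qpinf (p / x) p"
    unfolding theta_def by (subst qpinf_shift[OF assms(1)]) (simp add: mult.commute)
  have "qpinf (1 / x) p = (1 - 1 / x) * qpinf (p / x) p"
    by (subst qpinf_shift[OF assms(1)]) simp
  moreover have "p / (p * x) = 1 / x" using assms by simp
  ultimately show "theta (p * x) p = qpinf (p * x) p * ((1 - 1 / x) * qpinf (p / x) p)"
    unfolding theta_def by simp
qed

lemma theta_inv:
  fixes x p :: complex assumes "norm p < 1" "x \<noteq> 0"
  shows "theta (1 / x) p = - theta x p / x"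
proof (rule aux_shift[OF assms(2)])
  show "theta x p = (1 - x) * qpinf (p * x) p * qpinf (p / x) p"
    unfolding theta_def by (subst qpinf_shift[OF assms(1)]) (simp add: mult.commute)
  have "qpinf (1 / x) p = (1 - 1 / x) * qpinf (p / x) p"
    by (subst qpinf_shift[OF assms(1)]) simp
  moreover have "p / (1 / x) = p * x" using assms by simp
  ultimately show "theta (1 / x) p = qpinf (p * x) p * ((1 - 1 / x) * qpinf (p / x) p)"
    unfolding theta_def by (simp add: mult.commute)
qed

lemma theta_one: "norm p < 1 \<Longrightarrow> theta 1 p = 0"
  unfolding theta_def by (subst qpinf_shift) auto

lemma theta_p0: "theta x 0 = 1 - x"
proof -
  have "qpinf y 0 = 1 - y" for y :: complex
  proof -
    have "qpinf y 0 = (\<Prod>k\<in>{0}. 1 - y * 0 ^ k)"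
      unfolding qpinf_def by (rule prodinf_finite) auto
    thus ?thesis by simp
  qed
  thus ?thesis unfolding theta_def by simp
qed



lemma qpinf_holo_ball:
  fixes p :: complex assumes p: "norm p < 1"
  shows "(\<lambda>x. qpinf x p) holomorphic_on ball 0 \<rho>"
proof -
  have uc: "uniformly_convergent_on (cball 0 \<rho>) (\<lambda>N x. \<Prod>n<N. 1 - x * p ^ n)"
  proof (rule uniformly_convergent_on_prod')
    show "continuous_on (cball 0 \<rho>) (\<lambda>x. 1 - x * p ^ n)" for n
      by (intro continuous_intros)
    show "compact (cball (0::complex) \<rho>)" by simp
    show "uniformly_convergent_on (cball 0 \<rho>) (\<lambda>N x. \<Sum>n<N. norm (1 - x * p ^ n - 1))"
    proof (rule Weierstrass_m_test'[where M="\<lambda>n. \<rho> * norm p ^ n"])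
      show "norm (norm (1 - x * p ^ n - 1)) \<le> \<rho> * norm p ^ n" if "x \<in> cball 0 \<rho>" for n x
        using that by (auto simp: norm_mult norm_power intro!: mult_right_mono)
      show "summable (\<lambda>n. \<rho> * norm p ^ n)"
        using p by (intro summable_mult summable_geometric) auto
    qed
  qed
  then obtain S where S: "uniform_limit (cball 0 \<rho>) (\<lambda>N x. \<Prod>n<N. 1 - x * p ^ n) S sequentially"
    by (auto simp: uniformly_convergent_on_def)
  have eq: "S x = qpinf x p" if "x \<in> cball 0 \<rho>" for x
  proof -
    have l1: "(\<lambda>N. \<Prod>n<N. 1 - x * p ^ n) \<longlonglongrightarrow> S x"
      by (rule tendsto_uniform_limitI[OF S that])
    have "(\<lambda>N. \<Prod>n\<le>N. 1 - x * p ^ n) \<longlonglongrightarrow> qpinf x p"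
      unfolding qpinf_def by (rule convergent_prod_LIMSEQ[OF qp_conv[OF p]])
    hence "(\<lambda>N. \<Prod>n<Suc N. 1 - x * p ^ n) \<longlonglongrightarrow> qpinf x p"
      by (simp add: lessThan_Suc_atMost)
    hence "(\<lambda>N. \<Prod>n<N. 1 - x * p ^ n) \<longlonglongrightarrow> qpinf x p"
      by (rule LIMSEQ_imp_Suc)
    thus ?thesis using l1 LIMSEQ_unique by blast
  qed
  have "S holomorphic_on ball 0 \<rho>"
  proof (rule holomorphic_uniform_limit[OF _ S])
    show "\<forall>\<^sub>F n in sequentially. continuous_on (cball 0 \<rho>) (\<lambda>x. \<Prod>n<n. 1 - x * p ^ n) \<and>
            (\<lambda>x. \<Prod>n<n. 1 - x * p ^ n) holomorphic_on ball 0 \<rho>"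
      by (intro always_eventually allI conjI continuous_intros holomorphic_intros)
  qed auto
  thus ?thesis by (rule holomorphic_transform) (use eq in auto)
qed

lemma qpinf_holo:
  fixes p :: complex assumes p: "norm p < 1"
  shows "(\<lambda>x. qpinf x p) holomorphic_on UNIV"
  unfolding holomorphic_on_def
proof
  fix x :: complex
  have "x \<in> ball 0 (norm x + 1)" by simp
  hence "(\<lambda>x. qpinf x p) field_differentiable (at x)"
    by (rule holomorphic_on_imp_differentiable_at[OF qpinf_holo_ball[OF p] open_ball])
  thus "(\<lambda>x. qpinf x p) field_differentiable (at x within UNIV)" by simp
qed

lemma theta_holo:
  fixes p :: complex assumes p: "norm p < 1"
  shows "(\<lambda>x. theta x p) holomorphic_on - {0}"
proof -
  have h: "(\<lambda>x. qpinf x p) holomorphic_on UNIV" by (rule qpinf_holo[OF p])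
  have "((\<lambda>x. qpinf x p) \<circ> (\<lambda>x. p / x)) holomorphic_on - {0}"
    by (rule holomorphic_on_compose_gen[OF _ h]) (auto intro!: holomorphic_intros)
  moreover have "(\<lambda>x. qpinf x p) holomorphic_on - {0}"
    using h by (rule holomorphic_on_subset) auto
  ultimately have "(\<lambda>x. qpinf x p * qpinf (p / x) p) holomorphic_on - {0}"
    unfolding o_def by (intro holomorphic_on_mult)
  thus ?thesis unfolding theta_def .
qed

lemma theta_holo_comp:
  fixes p :: complex assumes p: "norm p < 1"
  assumes g: "g holomorphic_on S" and nz: "\<And>x. x \<in> S \<Longrightarrow> g x \<noteq> 0"
  shows "(\<lambda>x. theta (g x) p) holomorphic_on S"
proof -
  have "g ` S \<subseteq> - {0}" using nz by auto
  from holomorphic_on_compose_gen[OF g theta_holo[OF p] this] show ?thesis by (simp add: o_def)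
qed

lemma theta_cont_at:
  fixes p :: complex assumes p: "norm p < 1" and "x \<noteq> 0"
  shows "continuous (at x) (\<lambda>x. theta x p)"
proof -
  have "(\<lambda>x. theta x p) field_differentiable (at x)"
    by (rule holomorphic_on_imp_differentiable_at[OF theta_holo[OF p]]) (use assms in auto)
  thus ?thesis by (rule field_differentiable_imp_continuous_at)
qed

definition Rth :: "complex \<Rightarrow> complex \<Rightarrow> complex" where
  "Rth x p = qpinf (x * p) p * qpinf (p / x) p"

lemma theta_R: "norm p < 1 \<Longrightarrow> theta x p = (1 - x) * Rth x p"
  unfolding theta_def Rth_def by (subst qpinf_shift) auto

lemma Rth_cont_at:
  fixes p :: complex assumes p: "norm p < 1" and "x \<noteq> 0"
  shows "continuous (at x) (\<lambda>x. Rth x p)"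
proof -
  have h: "(\<lambda>x. qpinf x p) holomorphic_on UNIV" by (rule qpinf_holo[OF p])
  have "((\<lambda>x. qpinf x p) \<circ> (\<lambda>x. p / x)) holomorphic_on - {0}"
    by (rule holomorphic_on_compose_gen[OF _ h]) (auto intro!: holomorphic_intros)
  moreover have "((\<lambda>x. qpinf x p) \<circ> (\<lambda>x. x * p)) holomorphic_on - {0}"
    by (rule holomorphic_on_compose_gen[OF _ h]) (auto intro!: holomorphic_intros)
  ultimately have "(\<lambda>x. Rth x p) holomorphic_on - {0}"
    unfolding o_def Rth_def by (intro holomorphic_on_mult)
  hence "(\<lambda>x. Rth x p) field_differentiable (at x)"
    by (rule holomorphic_on_imp_differentiable_at) (use assms in auto)
  thus ?thesis by (rule field_differentiable_imp_continuous_at)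
qed

lemma qpinf_pp_nz:
  fixes p :: complex assumes p: "norm p < 1"
  shows "qpinf p p \<noteq> 0"
proof
  assume "qpinf p p = 0"
  then obtain k where k: "p * p ^ k = 1" using qpinf_zero_iff[OF p] by blast
  have "norm (p * p ^ k) = norm p ^ Suc k" by (simp add: norm_mult norm_power)
  also have "\<dots> \<le> norm p" by (simp add: mult_left_le power_le_one p less_imp_le)
  also have "\<dots> < 1" by (rule p)
  finally show False using k by simp
qed

lemma Rth_one: "norm p < 1 \<Longrightarrow> Rth 1 p \<noteq> 0"
  unfolding Rth_def using qpinf_pp_nz by auto

lemma theta_zero_imp:
  fixes x p :: complex assumes p: "norm p < 1" "p \<noteq> 0" and x: "x \<noteq> 0"
  assumes z: "theta x p = 0"
  shows "\<exists>k::int. x = p powi k"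
proof -
  from z have "qpinf x p = 0 \<or> qpinf (p / x) p = 0" unfolding theta_def by simp
  thus ?thesis
  proof
    assume "qpinf x p = 0"
    then obtain k where k: "x * p ^ k = 1" using qpinf_zero_iff[OF p(1)] by blast
    hence "x = inverse (p ^ k)" using p by (simp add: field_simps)
    hence "x = p powi (- int k)" by (simp add: power_int_minus)
    thus ?thesis by blast
  next
    assume "qpinf (p / x) p = 0"
    then obtain k where k: "p / x * p ^ k = 1" using qpinf_zero_iff[OF p(1)] by blast
    hence "x = p ^ Suc k" using x by (simp add: field_simps)
    hence "x = p powi (int (Suc k))" by (simp only: power_int_of_nat)
    thus ?thesis by blast
  qed
qed



lemma powi_invariant_nat:
  fixes p :: complex
  assumes p: "p \<noteq> 0" and inv: "\<And>x. x \<noteq> 0 \<Longrightarrow> P (p * x) = P x" and x: "x \<noteq> 0"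
  shows "P (p ^ n * x) = P x"
proof (induction n)
  case (Suc n)
  have "P (p ^ Suc n * x) = P (p * (p ^ n * x))" by (simp add: mult.assoc)
  also have "\<dots> = P (p ^ n * x)" by (rule inv) (use p x in simp)
  finally show ?case using Suc by simp
qed simp

lemma powi_invariant:
  fixes p :: complex
  assumes p: "p \<noteq> 0" and inv: "\<And>x. x \<noteq> 0 \<Longrightarrow> P (p * x) = P x" and x: "x \<noteq> 0"
  shows "P (p powi k * x) = P x"
proof (cases "k \<ge> 0")
  case True
  then obtain n where "k = int n" by (metis nonneg_eq_int)
  thus ?thesis using powi_invariant_nat[of p P x, OF p inv x] by (simp add: power_int_of_nat)
next
  case False
  then obtain n where k: "k = - int n" by (metis le_cases neg_0_le_iff_le nonneg_eq_int minus_minus)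
  define y where "y = inverse (p ^ n) * x"
  have y: "y \<noteq> 0" using p x by (simp add: y_def)
  have "P (p ^ n * y) = P y" by (rule powi_invariant_nat[of p P y, OF p inv y])
  moreover have "p ^ n * y = x" using p by (simp add: y_def)
  moreover have "p powi k * x = y" by (simp add: k y_def power_int_minus)
  ultimately show ?thesis by simp
qed

lemma annulus_k:
  fixes p x :: complex
  assumes p: "p \<noteq> 0" "norm p < 1" and x: "x \<noteq> 0"
  shows "\<exists>k::int. norm p \<le> norm (p powi k * x) \<and> norm (p powi k * x) \<le> 1"
proof -
  define a where "a = norm p"
  define L where "L = ln a"
  have a: "0 < a" "a < 1" using p by (auto simp: a_def)
  have L: "L < 0" using a by (simp add: L_def)
  define s where "s = - ln (norm x) / L"
  define k where "k = ceiling s"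
  have k1: "s \<le> k" and k2: "k < s + 1" unfolding k_def by linarith+
  have sL: "s * L = - ln (norm x)" using L by (simp add: s_def)
  have e1: "k * L \<le> s * L" using k1 L by (simp add: mult_right_mono_neg)
  have e2: "(s + 1) * L < k * L" using k2 L by (simp add: mult_strict_right_mono_neg)
  have nrm: "norm (p powi k * x) = exp (k * L + ln (norm x))"
  proof -
    have "norm (p powi k * x) = a powi k * norm x" by (simp add: norm_mult norm_power_int a_def)
    also have "a powi k = a powr (real_of_int k)" using a by (simp add: powr_real_of_int')
    also have "\<dots> = exp (k * L)" using a by (simp add: powr_def L_def mult.commute)
    also have "norm x = exp (ln (norm x))" using x by simp
    finally show ?thesis by (simp add: exp_add)
  qed
  have "exp (k * L + ln (norm x)) \<le> exp 0" using e1 sL by simp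
  moreover have "exp L \<le> exp (k * L + ln (norm x))" using e2 sL by (simp add: algebra_simps)
  moreover have "exp L = norm p" using a by (simp add: L_def a_def)
  ultimately show ?thesis using nrm by (intro exI[of _ k]) simp
qed

lemma remov:
  fixes F D E :: "complex \<Rightarrow> complex"
  assumes holF: "F holomorphic_on S" and holD: "D holomorphic_on S" and S: "open S" "x0 \<in> S"
    and F0: "F x0 = 0" and E: "continuous (at x0) E" "E x0 \<noteq> 0"
    and DE: "\<And>y. y \<in> S \<Longrightarrow> D y = (y - x0) * E y"
  shows "\<exists>c r. r > 0 \<and> ball x0 r \<subseteq> S \<and> (\<forall>y\<in>ball x0 r - {x0}. D y \<noteq> 0) \<and>
           (\<lambda>y. if y = x0 then c else F y / D y) holomorphic_on ball x0 r"
proof -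
  obtain r1 where r1: "r1 > 0" "ball x0 r1 \<subseteq> S" using S by (rule openE)
  obtain r2 where r2: "r2 > 0" "\<And>y. dist x0 y < r2 \<Longrightarrow> E y \<noteq> 0"
    using continuous_at_avoid[OF E] by blast
  define r where "r = min r1 r2"
  have r: "r > 0" "ball x0 r \<subseteq> S" using r1 r2 by (auto simp: r_def)
  have nzE: "E y \<noteq> 0" if "y \<in> ball x0 r" for y using that r2 by (auto simp: r_def dist_commute)
  have nz: "\<forall>y\<in>ball x0 r - {x0}. D y \<noteq> 0"
    using nzE r DE by auto
  obtain F' where F': "(F has_field_derivative F') (at x0)"
    using holomorphic_on_imp_differentiable_at[OF holF S(1) S(2)] by (auto simp: field_differentiable_def)
  have l1: "((\<lambda>y. (F y - F x0) / (y - x0)) \<longlongrightarrow> F') (at x0)"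
    using F' by (simp add: has_field_derivative_iff)
  have l2: "(E \<longlongrightarrow> E x0) (at x0)" using E by (simp add: continuous_at)
  have l3: "((\<lambda>y. (F y - F x0) / (y - x0) / E y) \<longlongrightarrow> F' / E x0) (at x0)"
    by (rule tendsto_divide[OF l1 l2 E(2)])
  have ev: "\<forall>\<^sub>F y in at x0. (F y - F x0) / (y - x0) / E y = F y / D y"
  proof -
    have "\<forall>\<^sub>F y in at x0. y \<in> ball x0 r"
      using r(1) by (intro eventually_at_in_open') auto
    thus ?thesis
    proof eventually_elim
      case (elim y)
      thus ?case using DE[of y] r F0 by (auto simp: divide_divide_eq_left mult.commute)
    qed
  qed
  have lim: "((\<lambda>y. F y / D y) \<longlongrightarrow> F' / E x0) (at x0)"
    using tendsto_cong[OF ev] l3 by blast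
  have "(\<lambda>y. F y / D y) holomorphic_on ball x0 r - {x0}"
    using nz r by (intro holomorphic_on_divide holomorphic_on_subset[OF holF] holomorphic_on_subset[OF holD]) auto
  hence "(\<lambda>y. if y = x0 then F' / E x0 else F y / D y) holomorphic_on ball x0 r"
    by (rule removable_singularity[OF _ open_ball lim])
  thus ?thesis using r nz by blast
qed



lemma theta_zero_powi:
  fixes p :: complex assumes p: "norm p < 1" "p \<noteq> 0"
  shows "theta (p powi k) p = 0"
proof -
  have "(theta (p powi k * 1) p = 0) = (theta 1 p = 0)"
  proof (rule powi_invariant[of p "\<lambda>y. theta y p = 0", OF p(2)])
    fix y :: complex assume "y \<noteq> 0"
    thus "(theta (p * y) p = 0) = (theta y p = 0)" using theta_shift[OF p, of y] by simp
  qed simp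
  thus ?thesis using theta_one[OF p(1)] by simp
qed

lemma aux_Dq:
  fixes x u T1 T2 A B :: complex
  assumes "x \<noteq> 0" "u \<noteq> 0" "T1 = - A / (x * u)" "T2 = - B / (x / u)"
  shows "T1 * T2 = A * B / x^2"
proof -
  have "T1 * T2 = (- A / (x * u)) * (- B / (x / u))" using assms by simp
  also have "\<dots> = A * B / x^2" using assms by (simp add: field_simps power2_eq_square)
  finally show ?thesis .
qed

lemma theta_space:
  fixes p u :: complex and F :: "complex \<Rightarrow> complex"
  assumes p: "p \<noteq> 0" "norm p < 1" and u: "u \<noteq> 0" "theta (u^2) p \<noteq> 0"
    and holF: "F holomorphic_on -{0}"
    and qp: "\<And>x. x \<noteq> 0 \<Longrightarrow> F (p * x) = F x / x^2"
    and z1: "F u = 0" and z2: "F (1 / u) = 0"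
  shows "\<exists>K. \<forall>x. x \<noteq> 0 \<longrightarrow> F x = K * (theta (x * u) p * theta (x / u) p)"
proof -
  define D where "D x = theta (x * u) p * theta (x / u) p" for x
  have holD: "D holomorphic_on -{0}" unfolding D_def using u
    by (intro holomorphic_on_mult theta_holo_comp[OF p(2)] holomorphic_intros) auto
  have Dq: "D (p * x) = D x / x^2" if x: "x \<noteq> 0" for x
  proof -
    have "theta (p * x * u) p = - theta (x * u) p / (x * u)"
      using theta_shift[OF p(2) p(1), of "x * u"] x u by (simp add: mult.assoc)
    moreover have "theta (p * x / u) p = - theta (x / u) p / (x / u)"
      using theta_shift[OF p(2) p(1), of "x / u"] x u by (simp add: times_divide_eq_right)
    ultimately show ?thesis unfolding D_def using aux_Dq[OF x u(1)] by simp
  qed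
  have th1: "theta 1 p = 0" by (rule theta_one[OF p(2)])
  have Du: "D u = 0" unfolding D_def using u th1 by simp
  define Cu where "Cu x \<longleftrightarrow> (\<exists>k::int. x = p powi k * u)" for x
  have Cu_inv: "Cu (p * x) = Cu x" if "x \<noteq> 0" for x
  proof
    assume "Cu (p * x)" then obtain k where "p * x = p powi k * u" by (auto simp: Cu_def)
    hence "x = p powi (k - 1) * u" using p by (simp add: power_int_diff field_simps)
    thus "Cu x" by (auto simp: Cu_def)
  next
    assume "Cu x" then obtain k where "x = p powi k * u" by (auto simp: Cu_def)
    hence "p * x = p powi (k + 1) * u" using p by (simp add: power_int_add)
    thus "Cu (p * x)" by (auto simp: Cu_def)
  qed
  have Dzero: "Cu x \<or> (\<exists>k::int. x = p powi k / u)" if x: "x \<noteq> 0" and Dx: "D x = 0" for x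
  proof -
    from Dx have "theta (x * u) p = 0 \<or> theta (x / u) p = 0" unfolding D_def by simp
    thus ?thesis
    proof
      assume "theta (x * u) p = 0"
      then obtain k where "x * u = p powi k" using theta_zero_imp[OF p(2) p(1)] x u by fastforce
      hence "x = p powi k / u" using u by (simp add: field_simps)
      thus ?thesis by blast
    next
      assume "theta (x / u) p = 0"
      then obtain k where "x / u = p powi k" using theta_zero_imp[OF p(2) p(1)] x u by fastforce
      hence "x = p powi k * u" using u by (simp add: field_simps)
      thus ?thesis by (auto simp: Cu_def)
    qed
  qed
  have Fz_inv: "(F (p * y) = 0) = (F y = 0)" if "y \<noteq> 0" for y using qp[OF that] that by simp
  have Fz: "F x = 0" if x: "x \<noteq> 0" and Dx: "D x = 0" for x
  proof -
    from Dzero[OF x Dx] show ?thesis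
    proof
      assume "Cu x" then obtain k where k: "x = p powi k * u" by (auto simp: Cu_def)
      have "(F (p powi k * u) = 0) = (F u = 0)"
        by (rule powi_invariant[of p "\<lambda>y. F y = 0", OF p(1) Fz_inv u(1)])
      thus ?thesis using k z1 by simp
    next
      assume "\<exists>k::int. x = p powi k / u" then obtain k where k: "x = p powi k * (1 / u)" by auto
      have nz: "1 / u \<noteq> 0" using u(1) by simp
      have "(F (p powi k * (1 / u)) = 0) = (F (1 / u) = 0)"
        by (rule powi_invariant[of p "\<lambda>y. F y = 0", OF p(1) Fz_inv nz])
      thus ?thesis using k z2 by simp
    qed
  qed
  have notCu: "\<not> Cu (1 / u)"
  proof
    assume "Cu (1 / u)" then obtain k where k: "1 / u = p powi k * u" by (auto simp: Cu_def)
    have pk: "p powi k \<noteq> 0" using p by simp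
    have "u ^ 2 = inverse (p powi k)" using k u pk by (simp add: field_simps power2_eq_square)
    hence "u ^ 2 = p powi (- k)" by (simp add: power_int_minus)
    hence "theta (u ^ 2) p = 0" using theta_zero_powi[OF p(2) p(1)] by simp
    thus False using u by simp
  qed
  define E1 where "E1 y = - (1 / u) * Rth (y / u) p * theta (y * u) p" for y
  have "\<exists>c r. r > 0 \<and> ball u r \<subseteq> -{0} \<and> (\<forall>y\<in>ball u r - {u}. D y \<noteq> 0) \<and>
           (\<lambda>y. if y = u then c else F y / D y) holomorphic_on ball u r"
  proof (rule remov[OF holF holD])
    show "open (- {0::complex})" by auto
    show "u \<in> - {0}" using u by auto
    show "F u = 0" by (rule z1)
    have c1: "continuous (at u) (\<lambda>y. Rth (y / u) p)"
    proof -
      have "continuous (at u) ((\<lambda>z. Rth z p) \<circ> (\<lambda>y. y / u))"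
        by (rule continuous_at_compose) (use u Rth_cont_at[OF p(2), of 1] in \<open>auto intro!: continuous_intros\<close>)
      thus ?thesis by (simp add: o_def)
    qed
    have c2: "continuous (at u) (\<lambda>y. theta (y * u) p)"
    proof -
      have "continuous (at u) ((\<lambda>z. theta z p) \<circ> (\<lambda>y. y * u))"
        by (rule continuous_at_compose) (use u theta_cont_at[OF p(2), of "u * u"] in \<open>auto intro!: continuous_intros\<close>)
      thus ?thesis by (simp add: o_def)
    qed
    show "continuous (at u) E1" unfolding E1_def by (intro continuous_intros c1 c2)
    show "E1 u \<noteq> 0" unfolding E1_def using u Rth_one[OF p(2)] by (simp add: power2_eq_square)
    show "D y = (y - u) * E1 y" if "y \<in> - {0}" for y
      unfolding D_def E1_def using u by (subst (2) theta_R[OF p(2)]) (simp add: field_simps)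
  qed
  then obtain c1 r1 where r1: "r1 > 0" "ball u r1 \<subseteq> -{0}" "\<forall>y\<in>ball u r1 - {u}. D y \<noteq> 0"
    and h1: "(\<lambda>y. if y = u then c1 else F y / D y) holomorphic_on ball u r1" by blast
  define E2 where "E2 y = - u * Rth (y * u) p * theta (y / u) p" for y
  have "\<exists>c r. r > 0 \<and> ball (1/u) r \<subseteq> -{0} \<and> (\<forall>y\<in>ball (1/u) r - {1/u}. D y \<noteq> 0) \<and>
           (\<lambda>y. if y = 1/u then c else F y / D y) holomorphic_on ball (1/u) r"
  proof (rule remov[OF holF holD])
    show "open (- {0::complex})" by auto
    show "1/u \<in> - {0}" using u by auto
    show "F (1/u) = 0" by (rule z2)
    have c1: "continuous (at (1/u)) (\<lambda>y. Rth (y * u) p)"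
    proof -
      have "continuous (at (1/u)) ((\<lambda>z. Rth z p) \<circ> (\<lambda>y. y * u))"
        by (rule continuous_at_compose) (use u Rth_cont_at[OF p(2), of 1] in \<open>auto intro!: continuous_intros\<close>)
      thus ?thesis by (simp add: o_def)
    qed
    have c2: "continuous (at (1/u)) (\<lambda>y. theta (y / u) p)"
    proof -
      have "continuous (at (1/u)) ((\<lambda>z. theta z p) \<circ> (\<lambda>y. y / u))"
        by (rule continuous_at_compose) (use u theta_cont_at[OF p(2), of "1 / u / u"] in \<open>auto intro!: continuous_intros\<close>)
      thus ?thesis by (simp add: o_def)
    qed
    show "continuous (at (1/u)) E2" unfolding E2_def by (intro continuous_intros c1 c2)
    have "theta (1 / (u ^ 2)) p = - theta (u ^ 2) p / u ^ 2" by (rule theta_inv[OF p(2)]) (use u in simp)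
    hence "theta (1 / u / u) p \<noteq> 0" using u by (simp add: power2_eq_square)
    thus "E2 (1/u) \<noteq> 0" unfolding E2_def using u Rth_one[OF p(2)] by simp
    show "D y = (y - 1/u) * E2 y" if "y \<in> - {0}" for y
      unfolding D_def E2_def using u by (subst (1) theta_R[OF p(2)]) (simp add: field_simps)
  qed
  then obtain c2 r2 where r2: "r2 > 0" "ball (1/u) r2 \<subseteq> -{0}" "\<forall>y\<in>ball (1/u) r2 - {1/u}. D y \<noteq> 0"
    and h2: "(\<lambda>y. if y = 1/u then c2 else F y / D y) holomorphic_on ball (1/u) r2" by blast
  define G where "G x = (if D x = 0 then (if Cu x then c1 else c2) else F x / D x)" for x
  have Ginv: "G (p * x) = G x" if x: "x \<noteq> 0" for x
  proof -
    have x2: "x ^ 2 \<noteq> 0" using x by simp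
    have "(D (p * x) = 0) = (D x = 0)" using Dq[OF x] x2 by simp
    moreover have "F (p * x) / D (p * x) = F x / D x" using Dq[OF x] qp[OF x] x2 by simp
    ultimately show ?thesis unfolding G_def using Cu_inv[OF x] by simp
  qed
  have Gk: "G (p powi k * x) = G x" if "x \<noteq> 0" for k x
  proof -
    have "(G (p powi k * x) = G x) = (G x = G x)"
      by (rule powi_invariant[of p "\<lambda>y. G y = G x", OF p(1) _ that]) (use Ginv in simp)
    thus ?thesis by simp
  qed
  have hol_u: "G holomorphic_on ball u r1"
  proof (rule holomorphic_transform[OF h1])
    fix y assume y: "y \<in> ball u r1"
    show "(if y = u then c1 else F y / D y) = G y"
    proof (cases "y = u")
      case True
      have "Cu u" unfolding Cu_def by (rule exI[of _ 0]) simp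
      thus ?thesis using True Du by (simp add: G_def)
    qed (use y r1 in \<open>auto simp: G_def\<close>)
  qed
  have hol_ui: "G holomorphic_on ball (1/u) r2"
  proof (rule holomorphic_transform[OF h2])
    fix y assume y: "y \<in> ball (1/u) r2"
    show "(if y = 1/u then c2 else F y / D y) = G y"
    proof (cases "y = 1/u")
      case True
      have "D (1/u) = 0" unfolding D_def using u th1 by simp
      thus ?thesis using True notCu by (simp add: G_def)
    qed (use y r2 in \<open>auto simp: G_def\<close>)
  qed
  have diff: "G field_differentiable (at x0)" if x0: "x0 \<noteq> 0" for x0
  proof (cases "D x0 = 0")
    case False
    have cD: "continuous (at x0) D"
      by (rule field_differentiable_imp_continuous_at, rule holomorphic_on_imp_differentiable_at[OF holD])
         (use x0 in auto)
    then obtain e where e: "e > 0" "\<And>y. dist x0 y < e \<Longrightarrow> D y \<noteq> 0"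
      using continuous_at_avoid[OF cD False] by blast
    define d where "d = min e (norm x0)"
    have d: "d > 0" using e x0 by (simp add: d_def)
    have sub: "ball x0 d \<subseteq> -{0}" by (auto simp: d_def dist_norm)
    have "(\<lambda>y. F y / D y) holomorphic_on ball x0 d"
      using e sub by (intro holomorphic_on_divide holomorphic_on_subset[OF holF] holomorphic_on_subset[OF holD])
        (auto simp: d_def dist_commute)
    hence "(\<lambda>y. F y / D y) field_differentiable (at x0)"
      by (rule holomorphic_on_imp_differentiable_at) (use d in auto)
    hence "(\<lambda>y. F y / D y) field_differentiable (at x0 within UNIV)" by simp
    hence "G field_differentiable (at x0 within UNIV)"
    proof (rule field_differentiable_transform_within[OF d, rotated 2])
      fix y assume "dist y x0 < d"
      hence "D y \<noteq> 0" using e by (auto simp: d_def dist_commute)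
      thus "F y / D y = G y" by (simp add: G_def)
    qed auto
    thus ?thesis by simp
  next
    case True
    have "\<exists>k::int. \<exists>z. x0 = p powi k * z \<and> G field_differentiable (at z)"
    proof (cases "Cu x0")
      case True
      then obtain k where "x0 = p powi k * u" by (auto simp: Cu_def)
      moreover have "G field_differentiable (at u)"
        by (rule holomorphic_on_imp_differentiable_at[OF hol_u]) (use r1 in auto)
      ultimately show ?thesis by blast
    next
      case False
      with Dzero[OF x0 True] obtain k where "x0 = p powi k * (1/u)" by auto
      moreover have "G field_differentiable (at (1/u))"
        by (rule holomorphic_on_imp_differentiable_at[OF hol_ui]) (use r2 in auto)
      ultimately show ?thesis by blast
    qed
    then obtain k z where kz: "x0 = p powi k * z" and dz: "G field_differentiable (at z)" by blast
    define m where "m y = p powi (- k) * y" for y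
    have mx0: "m x0 = z" using p by (simp add: m_def kz power_int_minus)
    have "m field_differentiable (at x0)" unfolding m_def
      by (intro derivative_intros)
    hence "(G \<circ> m) field_differentiable (at x0)"
      by (rule field_differentiable_compose) (simp add: mx0 dz)
    hence d1: "(G \<circ> m) field_differentiable (at x0 within UNIV)" by simp
    have eqm: "(G \<circ> m) y = G y" if "y \<in> UNIV" "dist y x0 < norm x0" for y
    proof -
      from that have "y \<noteq> 0" by (auto simp: dist_norm)
      thus "(G \<circ> m) y = G y" by (simp add: m_def Gk)
    qed
    have "norm x0 > 0" using x0 by simp
    from field_differentiable_transform_within[OF this _ eqm d1]
    show ?thesis by simp
  qed
  have holG: "G holomorphic_on -{0}"
    unfolding holomorphic_on_def using diff field_differentiable_at_within by blast
  define H where "H w = G (exp w)" for w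
  have holH: "H holomorphic_on UNIV"
  proof -
    have "(G \<circ> exp) holomorphic_on UNIV"
      by (rule holomorphic_on_compose_gen[OF _ holG]) (auto intro!: holomorphic_intros)
    moreover have "H = G \<circ> exp" by (rule ext) (simp add: H_def)
    ultimately show ?thesis by simp
  qed
  define K where "K = cball (0::complex) 1 \<inter> - ball 0 (norm p)"
  have compK: "compact K" unfolding K_def by (intro compact_Int_closed) auto
  have KS: "K \<subseteq> -{0}" using p by (auto simp: K_def)
  have bK: "bounded (G ` K)"
    by (intro compact_imp_bounded compact_continuous_image continuous_on_subset[OF holomorphic_on_imp_continuous_on[OF holG] KS] compK)
  have "range H \<subseteq> G ` K"
  proof
    fix v assume "v \<in> range H"
    then obtain w where w: "v = H w" by auto
    have ew: "exp w \<noteq> 0" by simp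
    obtain k where k: "norm p \<le> norm (p powi k * exp w)" "norm (p powi k * exp w) \<le> 1"
      using annulus_k[OF p ew] by blast
    have "p powi k * exp w \<in> K" using k by (auto simp: K_def)
    moreover have "v = G (p powi k * exp w)" using Gk[OF ew] by (simp add: w H_def)
    ultimately show "v \<in> G ` K" by blast
  qed
  hence "bounded (range H)" using bK bounded_subset by blast
  from Liouville_theorem[OF holH this] obtain c where c: "\<And>w. H w = c"
    unfolding constant_on_def by blast
  have Gc: "G x = c" if "x \<noteq> 0" for x
    using c[of "Ln x"] that by (simp add: H_def)
  show ?thesis
  proof (rule exI[of _ c], intro allI impI)
    fix x :: complex assume x: "x \<noteq> 0"
    show "F x = c * (theta (x * u) p * theta (x / u) p)"
    proof (cases "D x = 0")
      case True thus ?thesis using Fz[OF x] by (simp add: D_def)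
    next
      case False thus ?thesis using Gc[OF x] by (simp add: G_def D_def field_simps)
    qed
  qed
qed



definition Pt :: "complex \<Rightarrow> complex \<Rightarrow> complex \<Rightarrow> complex" where
  "Pt p c x = theta (x * c) p * theta (x / c) p"

lemma Pt_shift:
  fixes p c x :: complex assumes p: "p \<noteq> 0" "norm p < 1" and c: "c \<noteq> 0" and x: "x \<noteq> 0"
  shows "Pt p c (p * x) = Pt p c x / x^2"
proof -
  have "theta (p * x * c) p = - theta (x * c) p / (x * c)"
    using theta_shift[OF p(2) p(1), of "x * c"] x c by (simp add: mult.assoc)
  moreover have "theta (p * x / c) p = - theta (x / c) p / (x / c)"
    using theta_shift[OF p(2) p(1), of "x / c"] x c by (simp add: times_divide_eq_right)
  ultimately show ?thesis unfolding Pt_def using aux_Dq[OF x c] by simp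
qed

lemma Pt_inv:
  fixes p c x :: complex assumes p: "norm p < 1" and c: "c \<noteq> 0" and x: "x \<noteq> 0"
  shows "Pt p c (1 / x) = Pt p c x / x^2"
proof -
  have "theta (1 / x * c) p = - theta (x / c) p / (x / c)"
    using theta_inv[OF p, of "x / c"] x c by simp
  moreover have "theta (1 / x / c) p = - theta (x * c) p / (x * c)"
    using theta_inv[OF p, of "x * c"] x c by simp
  ultimately show ?thesis unfolding Pt_def using aux_Dq[OF x c] by (simp add: mult.commute)
qed

lemma Pt_holo:
  fixes p c :: complex assumes p: "norm p < 1" and c: "c \<noteq> 0"
  shows "Pt p c holomorphic_on - {0}"
proof -
  have "(\<lambda>x. theta (x * c) p * theta (x / c) p) holomorphic_on - {0}"
    using c by (intro holomorphic_on_mult theta_holo_comp[OF p] holomorphic_intros) auto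
  thus ?thesis unfolding Pt_def[abs_def] .
qed

lemma addition_generic:
  fixes p x y u v :: complex
  assumes p: "p \<noteq> 0" "norm p < 1" and nz: "x \<noteq> 0" "y \<noteq> 0" "u \<noteq> 0" "v \<noteq> 0"
    and g1: "theta (u^2) p \<noteq> 0" and g2: "theta (y * u) p * theta (y / u) p \<noteq> 0"
  shows "Pt p y x * Pt p v u - Pt p v x * Pt p y u = u / y * Pt p v y * Pt p u x"
proof -
  define F where "F z = Pt p y z * Pt p v u - Pt p v z * Pt p y u - u / y * Pt p v y * Pt p u z" for z
  have holF: "F holomorphic_on - {0}"
  proof -
    have "(\<lambda>z. Pt p y z * Pt p v u - Pt p v z * Pt p y u - u / y * Pt p v y * Pt p u z) holomorphic_on - {0}"
      using nz by (intro holomorphic_intros Pt_holo[OF p(2)]) auto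
    thus ?thesis unfolding F_def[abs_def] .
  qed
  have qp: "F (p * z) = F z / z^2" if z: "z \<noteq> 0" for z
    unfolding F_def using Pt_shift[OF p _ z] nz z by (simp add: field_simps)
  have Fi: "F (1 / z) = F z / z^2" if z: "z \<noteq> 0" for z
    unfolding F_def using Pt_inv[OF p(2) _ z] nz z by (simp add: field_simps)
  have th1: "theta 1 p = 0" by (rule theta_one[OF p(2)])
  have Fu: "F u = 0"
    unfolding F_def Pt_def using nz th1 by (simp add: mult.commute)
  have Fu': "F (1 / u) = 0" using Fi[OF nz(3)] Fu by simp
  obtain K where K: "\<And>z. z \<noteq> 0 \<Longrightarrow> F z = K * (theta (z * u) p * theta (z / u) p)"
    using theta_space[OF p nz(3) g1 holF qp Fu Fu'] by blast
  have Fy: "F y = 0"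
  proof -
    have "theta (y / u) p = - theta (u / y) p / (u / y)"
      using theta_inv[OF p(2), of "u / y"] nz by simp
    thus ?thesis unfolding F_def Pt_def using nz th1 by (simp add: field_simps) algebra
  qed
  have "K = 0" using K[OF nz(2)] Fy g2 by simp
  hence "F x = 0" using K[OF nz(1)] by simp
  thus ?thesis unfolding F_def by simp
qed



lemma addition:
  fixes p x y u v :: complex
  assumes p: "norm p < 1" and nz: "x \<noteq> 0" "y \<noteq> 0" "u \<noteq> 0" "v \<noteq> 0"
  shows "Pt p y x * Pt p v u - Pt p v x * Pt p y u = u / y * Pt p v y * Pt p u x"
proof (cases "p = 0")
  case True
  show ?thesis unfolding Pt_def True theta_p0 using nz by (simp add: field_simps)
next
  case False
  define \<Phi> where "\<Phi> w = Pt p y x * Pt p v w - Pt p v x * Pt p y w - w / y * Pt p v y * Pt p w x" for w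
  have hol: "\<Phi> holomorphic_on - {0}"
  proof -
    have h1: "(\<lambda>w. Pt p w x) holomorphic_on - {0}"
      unfolding Pt_def using nz by (intro holomorphic_on_mult theta_holo_comp[OF p] holomorphic_intros) auto
    have "(\<lambda>w. Pt p y x * Pt p v w - Pt p v x * Pt p y w - w / y * Pt p v y * Pt p w x) holomorphic_on - {0}"
      using nz by (intro holomorphic_intros Pt_holo[OF p] h1) auto
    thus ?thesis unfolding \<Phi>_def[abs_def] .
  qed
  have cont: "continuous (at u) \<Phi>"
    by (rule field_differentiable_imp_continuous_at, rule holomorphic_on_imp_differentiable_at[OF hol])
       (use nz in auto)
  define B where "B = {w. theta (w^2) p = 0} \<union> {w. theta (y * w) p = 0} \<union> {w. theta (y / w) p = 0}"
  have Bsub: "B - {0} \<subseteq> (\<Union>k::int. {csqrt (p powi k), - csqrt (p powi k), p powi k / y, y / p powi k})"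
  proof
    fix w assume w: "w \<in> B - {0}"
    have w0: "w \<noteq> 0" using w by simp
    have pk: "p powi k \<noteq> 0" for k :: int using False by simp
    from w consider "theta (w^2) p = 0" | "theta (y * w) p = 0" | "theta (y / w) p = 0"
      unfolding B_def by blast
    thus "w \<in> (\<Union>k::int. {csqrt (p powi k), - csqrt (p powi k), p powi k / y, y / p powi k})"
    proof cases
      case 1
      then obtain k where k: "w^2 = p powi k" using theta_zero_imp[OF p False, of "w^2"] w0 by auto
      hence "w^2 = (csqrt (p powi k))^2" by simp
      hence "w = csqrt (p powi k) \<or> w = - csqrt (p powi k)" by (rule power2_eq_iff[THEN iffD1])
      thus ?thesis by blast
    next
      case 2
      then obtain k where k: "y * w = p powi k" using theta_zero_imp[OF p False, of "y * w"] w0 nz by auto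
      hence "w = p powi k / y" using nz by (simp add: field_simps)
      thus ?thesis by blast
    next
      case 3
      then obtain k where k: "y / w = p powi k" using theta_zero_imp[OF p False, of "y / w"] w0 nz by auto
      hence "w = y / p powi k" using nz w0 pk[of k] by (simp add: field_simps)
      thus ?thesis by blast
    qed
  qed
  have cB: "countable (B - {0})"
    by (rule countable_subset[OF Bsub]) (rule countable_UN; simp add: countable_finite)
  have "\<Phi> u = 0"
  proof (rule ccontr)
    assume "\<Phi> u \<noteq> 0"
    then obtain e where e: "e > 0" "\<And>w. dist u w < e \<Longrightarrow> \<Phi> w \<noteq> 0"
      using continuous_at_avoid[OF cont] by blast
    define r where "r = min e (norm u)"
    have r: "r > 0" using e nz by (simp add: r_def)
    have "\<not> ball u r \<subseteq> B - {0}"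
      using uncountable_ball[OF r, of u] cB countable_subset by blast
    then obtain w where w: "w \<in> ball u r" "w \<notin> B - {0}" by blast
    have w0: "w \<noteq> 0" using w(1) by (auto simp: r_def dist_norm)
    have wB: "w \<notin> B" using w w0 by simp
    have "\<Phi> w = 0"
    proof -
      have "Pt p y x * Pt p v w - Pt p v x * Pt p y w = w / y * Pt p v y * Pt p w x"
        by (rule addition_generic[OF False p nz(1,2) w0 nz(4)]) (use wB in \<open>auto simp: B_def\<close>)
      thus ?thesis by (simp add: \<Phi>_def)
    qed
    moreover have "\<Phi> w \<noteq> 0" using e(2) w(1) by (auto simp: r_def)
    ultimately show False by simp
  qed
  thus ?thesis by (simp add: \<Phi>_def)
qed



lemma epoch_0 [simp]: "epoch a q p 0 = 1"
  by (simp add: epoch_def)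

lemma epoch_Suc: "epoch a q p (Suc m) = epoch a q p m * theta (a * q ^ m) p"
  by (simp add: epoch_def)

lemma epoch_Suc': "epoch a q p (Suc m) = theta a p * epoch (a * q) q p m"
  unfolding epoch_def by (subst prod.lessThan_Suc_shift) (simp add: mult.assoc)

lemma GS_id:
  fixes a b c q r p :: complex
  assumes p: "norm p < 1" and nz: "a \<noteq> 0" "b \<noteq> 0" "c \<noteq> 0" "q \<noteq> 0" "r \<noteq> 0"
  shows "theta (a * r^M) p * theta (b * r^M) p * theta (c * q^M) p * theta (a * q^M / (b * c)) p
       - theta (q^M) p * theta (a * q^M / b) p * theta (a * r^M / c) p * theta (b * c * r^M) p
       = q^M * theta (a * r^M * q^M) p * theta (b * r^M * inverse q ^ M) p * theta c p * theta (a / (b * c)) p"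
proof -
  define s where "s = csqrt (a * b)"
  have s2: "s * s = a * b" using power2_csqrt[of "a * b"] by (simp add: s_def power2_eq_square)
  have s0: "s \<noteq> 0" using s2 nz by auto
  have s2': "s^2 = a * b" using s2 by (simp add: power2_eq_square)
  define x where "x = r^M * s"
  define y where "y = a / s"
  define u where "u = q^M * (a / s)"
  define v where "v = c / (a / s)"
  have x0: "x \<noteq> 0" and y0: "y \<noteq> 0" and u0: "u \<noteq> 0" and v0: "v \<noteq> 0"
    using nz s0 by (auto simp: x_def y_def u_def v_def)
  have e1: "x * y = a * r^M" unfolding x_def y_def using s0 by (simp add: field_simps)
  have e2: "x / y = b * r^M" unfolding x_def y_def using s0 nz s2' by (simp add: field_simps power2_eq_square[symmetric])
  have e3: "u * v = c * q^M" unfolding u_def v_def using s0 nz by (simp add: field_simps)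
  have e4: "u / v = a * q^M / (b * c)" unfolding u_def v_def using s0 nz s2' by (simp add: field_simps power2_eq_square[symmetric])
  have e5: "x * v = b * c * r^M" unfolding x_def v_def using s0 nz s2' by (simp add: field_simps power2_eq_square[symmetric])
  have e6: "x / v = a * r^M / c" unfolding x_def v_def using s0 nz by (simp add: field_simps)
  have e7: "u * y = a * q^M / b" unfolding u_def y_def using s0 nz s2' by (simp add: field_simps power2_eq_square[symmetric])
  have e8: "u / y = q^M" unfolding u_def y_def using s0 nz by (simp add: field_simps)
  have e9: "y * v = c" unfolding y_def v_def using s0 nz by (simp add: field_simps)
  have e10: "y / v = a / (b * c)" unfolding y_def v_def using s0 nz s2' by (simp add: field_simps power2_eq_square[symmetric])
  have e11: "x * u = a * r^M * q^M" unfolding x_def u_def using s0 nz by (simp add: field_simps)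
  have e12: "x / u = b * r^M * inverse q ^ M" unfolding x_def u_def using s0 nz s2' by (simp add: field_simps power2_eq_square[symmetric])
  have "Pt p y x * Pt p v u - Pt p v x * Pt p y u = u / y * Pt p v y * Pt p u x"
    by (rule addition[OF p x0 y0 u0 v0])
  hence "theta (a * r^M) p * theta (b * r^M) p * (theta (c * q^M) p * theta (a * q^M / (b * c)) p)
       - theta (b * c * r^M) p * theta (a * r^M / c) p * (theta (a * q^M / b) p * theta (q^M) p)
       = q^M * (theta c p * theta (a / (b * c)) p) * (theta (a * r^M * q^M) p * theta (b * r^M * inverse q ^ M) p)"
    unfolding Pt_def e1 e2 e3 e4 e5 e6 e7 e8 e9 e10 e11 e12 .
  thus ?thesis by (simp add: mult_ac)
qed

definition GSN where
  "GSN a b c q r p m = epoch (a * r) r p m * epoch (b * r) r p m * epoch (c * q) q p m * epoch (a * q / (b * c)) q p m"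
definition GSM where
  "GSM a b c q r p m = epoch q q p m * epoch (a * q / b) q p m * epoch (a * r / c) r p m * epoch (b * c * r) r p m"
definition GSf where
  "GSf a b c q r p k = theta (a * r ^ k * q ^ k) p * theta (b * r ^ k * inverse q ^ k) p
     * (epoch a r p k * epoch b r p k * epoch c q p k * epoch (a / (b * c)) q p k)
     / (theta a p * theta b p * GSM a b c q r p k) * q ^ k"

lemma aux_step:
  fixes N G mu nu T Q :: complex
  assumes "G \<noteq> 0" "mu \<noteq> 0" "nu = mu + Q * T"
  shows "N / G + T * N * Q / (G * mu) = N * nu / (G * mu)"
  using assms by (simp add: field_simps)

lemma GS_sum:
  fixes a b c q r p :: complex
  assumes p: "norm p < 1" and nz: "a \<noteq> 0" "b \<noteq> 0" "c \<noteq> 0" "q \<noteq> 0" "r \<noteq> 0"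
    and th: "theta a p * theta b p \<noteq> 0"
  shows "GSM a b c q r p m \<noteq> 0 \<Longrightarrow> (\<Sum>k=0..m. GSf a b c q r p k) = GSN a b c q r p m / GSM a b c q r p m"
proof (induction m)
  case 0
  show ?case using th by (simp add: GSf_def GSN_def GSM_def)
next
  case (Suc m)
  define mu where "mu = theta (q * q ^ m) p * theta (a * q / b * q ^ m) p * theta (a * r / c * r ^ m) p * theta (b * c * r * r ^ m) p"
  define nu where "nu = theta (a * r * r ^ m) p * theta (b * r * r ^ m) p * theta (c * q * q ^ m) p * theta (a * q / (b * c) * q ^ m) p"
  define T where "T = theta (a * r ^ Suc m * q ^ Suc m) p * theta (b * r ^ Suc m * inverse q ^ Suc m) p * theta c p * theta (a / (b * c)) p"
  have GM: "GSM a b c q r p (Suc m) = GSM a b c q r p m * mu"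
    unfolding GSM_def mu_def by (simp only: epoch_Suc) (simp add: mult_ac)
  have GN: "GSN a b c q r p (Suc m) = GSN a b c q r p m * nu"
    unfolding GSN_def nu_def by (simp only: epoch_Suc) (simp add: mult_ac)
  have G0: "GSM a b c q r p m \<noteq> 0" and mu0: "mu \<noteq> 0" using Suc.prems GM by auto
  have IH: "(\<Sum>k=0..m. GSf a b c q r p k) = GSN a b c q r p m / GSM a b c q r p m"
    by (rule Suc.IH[OF G0])
  have eabc: "a / (b * c) * q = a * q / (b * c)" by simp
  have f: "GSf a b c q r p (Suc m) = T * GSN a b c q r p m * q ^ Suc m / (GSM a b c q r p m * mu)"
  proof -
    have "epoch a r p (Suc m) * epoch b r p (Suc m) * epoch c q p (Suc m) * epoch (a / (b * c)) q p (Suc m)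
        = (theta a p * theta b p) * (theta c p * theta (a / (b * c)) p * GSN a b c q r p m)"
      unfolding GSN_def epoch_Suc' eabc by (simp add: mult_ac)
    thus ?thesis unfolding GSf_def GM T_def using th by (simp add: field_simps)
  qed
  have id: "nu = mu + q ^ Suc m * T"
  proof -
    have "theta (a * r^Suc m) p * theta (b * r^Suc m) p * theta (c * q^Suc m) p * theta (a * q^Suc m / (b * c)) p
       - theta (q^Suc m) p * theta (a * q^Suc m / b) p * theta (a * r^Suc m / c) p * theta (b * c * r^Suc m) p
       = q^Suc m * theta (a * r^Suc m * q^Suc m) p * theta (b * r^Suc m * inverse q ^ Suc m) p * theta c p * theta (a / (b * c)) p"
      by (rule GS_id[OF p nz])
    moreover have "a * r^Suc m = a * r * r ^ m" "b * r^Suc m = b * r * r ^ m" "c * q^Suc m = c * q * q ^ m"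
      "a * q^Suc m / (b * c) = a * q / (b * c) * q ^ m" "q^Suc m = q * q ^ m" "a * q^Suc m / b = a * q / b * q ^ m"
      "a * r^Suc m / c = a * r / c * r ^ m" "b * c * r^Suc m = b * c * r * r ^ m"
      by (simp_all add: mult_ac)
    ultimately show ?thesis unfolding mu_def nu_def T_def by (simp add: algebra_simps)
  qed
  have "(\<Sum>k=0..Suc m. GSf a b c q r p k) = GSN a b c q r p m / GSM a b c q r p m + GSf a b c q r p (Suc m)"
    using IH by simp
  also have "\<dots> = GSN a b c q r p m * nu / (GSM a b c q r p m * mu)"
    unfolding f by (rule aux_step[OF G0 mu0 id])
  also have "\<dots> = GSN a b c q r p (Suc m) / GSM a b c q r p (Suc m)" by (simp add: GM GN)
  finally show ?case .
qed



lemma epoch_split: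
  assumes "k \<le> n"
  shows "epoch x q p n = epoch x q p (n - k) * (\<Prod>i<k. theta (x * q ^ (n - 1 - i)) p)"
  using assms
proof (induction k)
  case (Suc k)
  have nk: "n - k = Suc (n - Suc k)" using Suc.prems by simp
  have e: "n - 1 - k = n - Suc k" by simp
  have "epoch x q p n = epoch x q p (n - k) * (\<Prod>i<k. theta (x * q ^ (n - 1 - i)) p)"
    using Suc by simp
  also have "epoch x q p (n - k) = epoch x q p (n - Suc k) * theta (x * q ^ (n - Suc k)) p"
    unfolding nk by (rule epoch_Suc)
  finally show ?case by (simp add: e mult_ac)
qed simp

definition Cf :: "complex \<Rightarrow> complex \<Rightarrow> nat \<Rightarrow> nat \<Rightarrow> complex" where
  "Cf x q n k = (\<Prod>i<k. - (x * q ^ (n - 1 - i)))"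

lemma epoch_split_rev:
  fixes x q p z :: complex
  assumes p: "norm p < 1" and x: "x \<noteq> 0" and q: "q \<noteq> 0" and kn: "k \<le> n" and z: "z * x * q ^ n = q"
  shows "epoch x q p n = epoch x q p (n - k) * Cf x q n k * epoch z q p k"
proof -
  have "(\<Prod>i<k. theta (x * q ^ (n - 1 - i)) p) = (\<Prod>i<k. - (x * q ^ (n - 1 - i)) * theta (z * q ^ i) p)"
  proof (rule prod.cong[OF refl])
    fix i assume i: "i \<in> {..<k}"
    define w where "w = x * q ^ (n - 1 - i)"
    have w0: "w \<noteq> 0" using x q by (simp add: w_def)
    have n1: "n = Suc (n - 1)" using i kn by auto
    have zx: "z * x * q ^ (n - 1) = 1"
    proof -
      have "z * x * q ^ (n - 1) * q = q" using z n1 by (metis mult.assoc mult.commute power_Suc)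
      thus ?thesis using q by simp
    qed
    have "q ^ i * q ^ (n - 1 - i) = q ^ (n - 1)" using i kn by (simp add: power_add[symmetric])
    hence "z * q ^ i * w = 1" unfolding w_def using zx by (simp add: mult_ac)
    hence zw: "z * q ^ i = 1 / w" using w0 by (simp add: field_simps)
    have "theta (1 / w) p = - theta w p / w" by (rule theta_inv[OF p w0])
    hence "theta w p = - w * theta (z * q ^ i) p" unfolding zw using w0 by (simp add: field_simps)
    thus "theta (x * q ^ (n - 1 - i)) p = - (x * q ^ (n - 1 - i)) * theta (z * q ^ i) p"
      by (simp add: w_def)
  qed
  also have "\<dots> = Cf x q n k * epoch z q p k"
    unfolding Cf_def epoch_def by (rule prod.distrib)
  finally show ?thesis using epoch_split[OF kn, of x q p] by (simp add: mult_ac)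
qed

definition Gnum where
  "Gnum a b c q r p n k = epoch (c * inverse r ^ n / a) r p k * epoch (inverse r ^ n / (b * c)) r p k
     * epoch (inverse q ^ n) q p k * epoch (b * inverse q ^ n / a) q p k"
definition Gden where
  "Gden a b c q r p n k = epoch (inverse q ^ n / c) q p k * epoch (b * c * inverse q ^ n / a) q p k
     * epoch (inverse r ^ n / a) r p k * epoch (inverse r ^ n / b) r p k"

lemma Pi_rev:
  fixes a b c q r p :: complex
  assumes p: "norm p < 1" and nz: "a \<noteq> 0" "b \<noteq> 0" "c \<noteq> 0" "q \<noteq> 0" "r \<noteq> 0"
    and kn: "k \<le> n" and Gd: "Gden a b c q r p n k \<noteq> 0" and Mn: "GSM a b c q r p n \<noteq> 0"
  shows "GSN a b c q r p (n - k) / GSM a b c q r p (n - k)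
       = Gnum a b c q r p n k / Gden a b c q r p n k * (GSN a b c q r p n / GSM a b c q r p n)"
proof -
  have rq: "inverse r ^ n * r ^ n = 1" "inverse q ^ n * q ^ n = 1" using nz
    by (simp_all add: power_inverse[symmetric] field_simps)
  note sr = epoch_split_rev[OF p _ _ kn]
  have N1: "epoch (a * r) r p n = epoch (a * r) r p (n - k) * Cf (a * r) r n k * epoch (inverse r ^ n / a) r p k"
    by (rule sr) (use nz rq in \<open>simp_all add: field_simps\<close>)
  have N2: "epoch (b * r) r p n = epoch (b * r) r p (n - k) * Cf (b * r) r n k * epoch (inverse r ^ n / b) r p k"
    by (rule sr) (use nz rq in \<open>simp_all add: field_simps\<close>)
  have N3: "epoch (c * q) q p n = epoch (c * q) q p (n - k) * Cf (c * q) q n k * epoch (inverse q ^ n / c) q p k"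
    by (rule sr) (use nz rq in \<open>simp_all add: field_simps\<close>)
  have N4: "epoch (a * q / (b * c)) q p n = epoch (a * q / (b * c)) q p (n - k) * Cf (a * q / (b * c)) q n k * epoch (b * c * inverse q ^ n / a) q p k"
    by (rule sr) (use nz rq in \<open>simp_all add: field_simps\<close>)
  have M1: "epoch q q p n = epoch q q p (n - k) * Cf q q n k * epoch (inverse q ^ n) q p k"
    by (rule sr) (use nz rq in \<open>simp_all add: field_simps\<close>)
  have M2: "epoch (a * q / b) q p n = epoch (a * q / b) q p (n - k) * Cf (a * q / b) q n k * epoch (b * inverse q ^ n / a) q p k"
    by (rule sr) (use nz rq in \<open>simp_all add: field_simps\<close>)
  have M3: "epoch (a * r / c) r p n = epoch (a * r / c) r p (n - k) * Cf (a * r / c) r n k * epoch (c * inverse r ^ n / a) r p k"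
    by (rule sr) (use nz rq in \<open>simp_all add: field_simps\<close>)
  have M4: "epoch (b * c * r) r p n = epoch (b * c * r) r p (n - k) * Cf (b * c * r) r n k * epoch (inverse r ^ n / (b * c)) r p k"
    by (rule sr) (use nz rq in \<open>simp_all add: field_simps\<close>)
  define CN where "CN = Cf (a * r) r n k * Cf (b * r) r n k * Cf (c * q) q n k * Cf (a * q / (b * c)) q n k"
  define CM where "CM = Cf q q n k * Cf (a * q / b) q n k * Cf (a * r / c) r n k * Cf (b * c * r) r n k"
  have CNM: "CN = CM"
  proof -
    have "CN = (\<Prod>i<k. (- (a * r * r ^ (n - 1 - i))) * (- (b * r * r ^ (n - 1 - i))) * (- (c * q * q ^ (n - 1 - i))) * (- (a * q / (b * c) * q ^ (n - 1 - i))))"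
      unfolding CN_def Cf_def by (simp only: prod.distrib)
    also have "\<dots> = (\<Prod>i<k. (- (q * q ^ (n - 1 - i))) * (- (a * q / b * q ^ (n - 1 - i))) * (- (a * r / c * r ^ (n - 1 - i))) * (- (b * c * r * r ^ (n - 1 - i))))"
      by (rule prod.cong[OF refl]) (use nz in \<open>simp add: field_simps\<close>)
    also have "\<dots> = CM"
      unfolding CM_def Cf_def by (simp only: prod.distrib)
    finally show ?thesis .
  qed
  have GN: "GSN a b c q r p n = GSN a b c q r p (n - k) * CN * Gden a b c q r p n k"
    unfolding GSN_def Gden_def CN_def N1 N2 N3 N4 by (simp add: mult_ac)
  have GM: "GSM a b c q r p n = GSM a b c q r p (n - k) * CM * Gnum a b c q r p n k"
    unfolding GSM_def Gnum_def CM_def M1 M2 M3 M4 by (simp add: mult_ac)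
  have nzs: "GSM a b c q r p (n - k) \<noteq> 0" "CM \<noteq> 0" "Gnum a b c q r p n k \<noteq> 0"
    using Mn GM by auto
  show ?thesis unfolding GN GM CNM using nzs Gd by (simp add: field_simps)
qed

lemma swap_sum:
  fixes f g :: "nat \<Rightarrow> complex"
  shows "(\<Sum>k=0..n. f k * (\<Sum>j=0..n-k. g j)) = (\<Sum>j=0..n. g j * (\<Sum>k=0..n-j. f k))"
proof -
  have L: "(\<Sum>j=0..n-k. h j) = (\<Sum>j=0..n. if j + k \<le> n then h j else 0)" if "k \<le> n" for k and h :: "nat \<Rightarrow> complex"
  proof -
    have "(\<Sum>j=0..n. if j + k \<le> n then h j else 0) = (\<Sum>j\<in>{0..n} \<inter> {j. j + k \<le> n}. h j)"
      by (simp add: sum.inter_restrict)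
    also have "{0..n} \<inter> {j. j + k \<le> n} = {0..n-k}" using that by auto
    finally show ?thesis by simp
  qed
  have "(\<Sum>k=0..n. f k * (\<Sum>j=0..n-k. g j)) = (\<Sum>k=0..n. \<Sum>j=0..n. if j + k \<le> n then f k * g j else 0)"
    by (rule sum.cong[OF refl]) (simp add: L sum_distrib_left if_distrib cong: if_cong)
  also have "\<dots> = (\<Sum>j=0..n. \<Sum>k=0..n. if j + k \<le> n then f k * g j else 0)"
    by (rule sum.swap)
  also have "\<dots> = (\<Sum>j=0..n. g j * (\<Sum>k=0..n-j. f k))"
    by (rule sum.cong[OF refl]) (simp add: L sum_distrib_left if_distrib add.commute mult.commute cong: if_cong)
  finally show ?thesis .
qed



lemma aux_div: "(X::complex) * Y / (Z * W) * t = (X / Z * t) * (Y / W)"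
  by (simp add: divide_inverse mult_ac)

lemma summand_split:
  "summand a b c q r p A B C Q R P n k = GSf a b c q r p k * (Gnum A B C Q R P n k / Gden A B C Q R P n k)"
proof -
  have num: "sum_num a b c q r p A B C Q R P n k = (theta (a * r ^ k * q ^ k) p * theta (b * r ^ k * inverse q ^ k) p
      * (epoch a r p k * epoch b r p k * epoch c q p k * epoch (a / (b * c)) q p k)) * Gnum A B C Q R P n k"
    unfolding sum_num_def Gnum_def by (simp add: mult_ac)
  have den: "sum_den a b c q r p A B C Q R P n k = (theta a p * theta b p * GSM a b c q r p k) * Gden A B C Q R P n k"
    unfolding sum_den_def Gden_def GSM_def by (simp add: mult_ac)
  show ?thesis unfolding summand_def num den GSf_def by (rule aux_div)
qed

lemma sum_den_split:
  "sum_den a b c q r p A B C Q R P n k = theta a p * theta b p * GSM a b c q r p k * Gden A B C Q R P n k"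
  unfolding sum_den_def Gden_def GSM_def by (simp add: mult_ac)

lemma pre_num_split: "pre_num a b c q r p A B C Q R P n = GSN a b c q r p n * GSM A B C Q R P n"
  unfolding pre_num_def GSN_def GSM_def by (simp add: mult_ac)

lemma pre_den_split: "pre_den a b c q r p A B C Q R P n = GSM a b c q r p n * GSN A B C Q R P n"
  unfolding pre_den_def GSN_def GSM_def by (simp add: mult_ac)

lemma GSM_mono:
  assumes "m \<le> n" "GSM a b c q r p n \<noteq> 0" shows "GSM a b c q r p m \<noteq> 0"
proof -
  have "epoch x q' p n = epoch x q' p m * (\<Prod>i<n - m. theta (x * q' ^ (n - 1 - i)) p)" for x q'
    using epoch_split[of "n - m" n x q' p] assms(1) by simp
  thus ?thesis using assms(2) unfolding GSM_def by auto
qed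

theorem mainTheorem14:
  fixes a b c q r p A B C Q R P :: complex and n :: nat
  assumes "norm p < 1" and "norm P < 1"
    and "a \<noteq> 0" "b \<noteq> 0" "c \<noteq> 0" "q \<noteq> 0" "r \<noteq> 0"
    and "A \<noteq> 0" "B \<noteq> 0" "C \<noteq> 0" "Q \<noteq> 0" "R \<noteq> 0"
    and "\<And>k. k \<le> n \<Longrightarrow> sum_den a b c q r p A B C Q R P n k \<noteq> 0"
    and "\<And>k. k \<le> n \<Longrightarrow> sum_den A B C Q R P a b c q r p n k \<noteq> 0"
    and "pre_den a b c q r p A B C Q R P n \<noteq> 0"
  shows "(\<Sum>k=0..n. summand a b c q r p A B C Q R P n k)
       = pre_num a b c q r p A B C Q R P n / pre_den a b c q r p A B C Q R P n
         * (\<Sum>k=0..n. summand A B C Q R P a b c q r p n k)"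
proof -
  note p = assms(1) and P = assms(2)
  note nzl = assms(3-7) and nzU = assms(8-12)
  define fl where "fl k = GSf a b c q r p k" for k
  define fU where "fU k = GSf A B C Q R P k" for k
  define gl where "gl k = Gnum a b c q r p n k / Gden a b c q r p n k" for k
  define gU where "gU k = Gnum A B C Q R P n k / Gden A B C Q R P n k" for k
  define Pl where "Pl m = GSN a b c q r p m / GSM a b c q r p m" for m
  define PU where "PU m = GSN A B C Q R P m / GSM A B C Q R P m" for m
  have d1: "theta a p * theta b p \<noteq> 0 \<and> GSM a b c q r p k \<noteq> 0 \<and> Gden A B C Q R P n k \<noteq> 0" if "k \<le> n" for k
    using assms(13)[OF that] unfolding sum_den_split by auto
  have d2: "theta A P * theta B P \<noteq> 0 \<and> GSM A B C Q R P k \<noteq> 0 \<and> Gden a b c q r p n k \<noteq> 0" if "k \<le> n" for k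
    using assms(14)[OF that] unfolding sum_den_split by auto
  have d3: "GSM a b c q r p n \<noteq> 0" "GSN A B C Q R P n \<noteq> 0"
    using assms(15) unfolding pre_den_split by auto
  have GSl: "(\<Sum>k=0..m. fl k) = Pl m" if "m \<le> n" for m
    unfolding fl_def Pl_def using d1[OF that] by (intro GS_sum[OF p nzl]) auto
  have GSU: "(\<Sum>k=0..m. fU k) = PU m" if "m \<le> n" for m
    unfolding fU_def PU_def using d2[OF that] by (intro GS_sum[OF P nzU]) auto
  have Rl: "Pl (n - k) = gl k * Pl n" if "k \<le> n" for k
    unfolding Pl_def gl_def using d2[OF that] d3 by (intro Pi_rev[OF p nzl that]) auto
  have RU: "PU (n - k) = gU k * PU n" if "k \<le> n" for k
    unfolding PU_def gU_def using d2[of n] d1[OF that] by (intro Pi_rev[OF P nzU that]) auto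
  have PUn: "PU n \<noteq> 0" unfolding PU_def using d3 d2[of n] by simp
  have "(\<Sum>k=0..n. summand a b c q r p A B C Q R P n k) = (\<Sum>k=0..n. fl k * gU k)"
    unfolding fl_def gU_def summand_split ..
  also have "\<dots> = (\<Sum>k=0..n. fl k * PU (n - k)) / PU n"
    unfolding sum_divide_distrib by (rule sum.cong[OF refl]) (use RU PUn in simp)
  also have "(\<Sum>k=0..n. fl k * PU (n - k)) = (\<Sum>k=0..n. fl k * (\<Sum>j=0..n-k. fU j))"
    by (rule sum.cong[OF refl]) (simp add: GSU)
  also have "\<dots> = (\<Sum>j=0..n. fU j * (\<Sum>k=0..n-j. fl k))"
    by (rule swap_sum)
  also have "\<dots> = (\<Sum>j=0..n. fU j * (gl j * Pl n))"
    by (rule sum.cong[OF refl]) (simp add: GSl Rl)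
  also have "\<dots> = Pl n * (\<Sum>j=0..n. fU j * gl j)"
    by (simp add: sum_distrib_left mult_ac)
  also have "(\<Sum>j=0..n. fU j * gl j) = (\<Sum>k=0..n. summand A B C Q R P a b c q r p n k)"
    unfolding fU_def gl_def summand_split ..
  also have "Pl n * (\<Sum>k=0..n. summand A B C Q R P a b c q r p n k) / PU n
      = pre_num a b c q r p A B C Q R P n / pre_den a b c q r p A B C Q R P n
         * (\<Sum>k=0..n. summand A B C Q R P a b c q r p n k)"
    unfolding pre_num_split pre_den_split Pl_def PU_def using d2[of n] by simp
  finally show ?thesis .
qed


end
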